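(* Let $p:[0,\infty)\to[0,1]$ be log-convex, strictly decreasing, and twice continuously differentiable on $[0,\infty)$, and for $\alpha\in(0,1]$ let $h(x)=(-\log p(x))^{\alpha}$. If $\alpha\in(0,1)$, then $h$ is strictly concave on $[0,\infty)$. Moreover, $h$ is concave on $[0,\infty)$ for every $\alpha\in(0,1]$.
   Context: Here $p$ is the attack success probability on an edge of an attack graph as a function of the security investment $x$ on that edge, and $\alpha$ is the parameter of the Prelec probability weighting function $w(p)=\exp[-(-\log p)^{\alpha}]$. *)

theory Defs
  imports "HOL-Analysis.Analysis"
begin

definition strictly_concave_on :: "real set \<Rightarrow> (real \<Rightarrow> real) \<Rightarrow> bool" where
  "strictly_concave_on S f \<longleftrightarrow> convex S \<and>
    (\<forall>x\<in>S. \<forall>y\<in>S. x \<noteq> y \<longrightarrow> (\<forall>u. 0 < u \<and> u < 1 \<longrightarrow>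
       u * f x + (1 - u) * f y < f (u * x + (1 - u) * y)))"

end

theory Submission
  imports Defs
begin

lemma bern_strict:
  fixes t a :: real
  assumes "0 \<le> t" "t \<noteq> 1" "0 < a" "a < 1"
  shows "t powr a < 1 + a * (t - 1)"
proof -
  define f where "f = (\<lambda>s::real. s powr a - a * s)"
  have der: "DERIV f s :> (a * s powr (a - 1) - a)" if "s > 0" for s
    unfolding f_def using that
    by (auto intro!: derivative_eq_intros)
  show ?thesis
  proof (cases "t = 0")
    case True then show ?thesis using assms by simp
  next
    case False
    then have tp: "t > 0" using assms by simp
    show ?thesis
    proof (cases "t < 1")
      case True
      obtain z where z: "t < z" "z < 1" "f 1 - f t = (1 - t) * (a * z powr (a - 1) - a)"
        using MVT2[of t 1 f "\<lambda>s. a * s powr (a - 1) - a"] True tp der by force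
      have "1 powr (a - 1) < z powr (a - 1)"
        using z tp assms by (intro powr_less_mono2_neg) auto
      then have "z powr (a - 1) > 1" by simp
      then have "f 1 - f t > 0" using z True assms by simp
      then show ?thesis unfolding f_def using assms by (simp add: algebra_simps)
    next
      case False
      then have t1: "t > 1" using assms by simp
      obtain z where z: "1 < z" "z < t" "f t - f 1 = (t - 1) * (a * z powr (a - 1) - a)"
        using MVT2[of 1 t f "\<lambda>s. a * s powr (a - 1) - a"] t1 der by force
      have "z powr (a - 1) < 1 powr (a - 1)"
        using z assms by (intro powr_less_mono2_neg) auto
      then have "z powr (a - 1) < 1" by simp
      then have "f t - f 1 < 0" using z t1 assms by (simp add: mult_pos_neg)
      then show ?thesis unfolding f_def using assms by (simp add: algebra_simps)
    qed
  qed
qed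

lemma bern:
  fixes t a :: real
  assumes "0 \<le> t" "0 < a" "a < 1"
  shows "t powr a \<le> 1 + a * (t - 1)"
  using bern_strict[OF assms(1) _ assms(2,3)] by (cases "t = 1") auto

lemma pow_strict:
  fixes a b u al :: real
  assumes "0 \<le> a" "0 \<le> b" "a \<noteq> b" "0 < u" "u < 1" "0 < al" "al < 1"
  shows "u * a powr al + (1 - u) * b powr al < (u * a + (1 - u) * b) powr al"
proof -
  define m where "m = u * a + (1 - u) * b"
  have mpos: "m > 0"
  proof -
    have "a > 0 \<or> b > 0" using assms by auto
    then show ?thesis unfolding m_def using assms
      by (auto intro: add_pos_nonneg add_nonneg_pos)
  qed
  have ne: "a / m \<noteq> 1" 
  proof
    assume "a / m = 1"
    then have "a = m" using mpos by simp
    then have "(1 - u) * a = (1 - u) * b" unfolding m_def by (simp add: algebra_simps)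
    then show False using assms by simp
  qed
  have A: "(a / m) powr al < 1 + al * (a / m - 1)"
    using bern_strict[OF _ ne] assms mpos by simp
  have B: "(b / m) powr al \<le> 1 + al * (b / m - 1)"
    using bern assms mpos by simp
  have "u * (a / m) powr al + (1 - u) * (b / m) powr al
      < u * (1 + al * (a / m - 1)) + (1 - u) * (1 + al * (b / m - 1))"
    using A B assms by (intro add_less_le_mono mult_left_mono) (auto)
  also have "\<dots> = 1 + al * ((u * a + (1 - u) * b) / m - 1)"
    using mpos by (simp add: field_simps)
  also have "\<dots> = 1" using mpos unfolding m_def by simp
  finally have "u * (a / m) powr al + (1 - u) * (b / m) powr al < 1" .
  then have "(u * a powr al + (1 - u) * b powr al) / m powr al < 1"
    using assms mpos by (simp add: powr_divide add_divide_distrib)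
  then show ?thesis using mpos unfolding m_def[symmetric] by (simp add: divide_less_eq)
qed

lemma pow_conc:
  fixes a b u al :: real
  assumes "0 \<le> a" "0 \<le> b" "0 \<le> u" "u \<le> 1" "0 < al" "al \<le> 1"
  shows "u * a powr al + (1 - u) * b powr al \<le> (u * a + (1 - u) * b) powr al"
proof (cases "al = 1 \<or> u = 0 \<or> u = 1 \<or> a = b")
  case True
  then show ?thesis using assms
    by (auto simp: algebra_simps powr_one)
next
  case False
  then show ?thesis using pow_strict[of a b u al] assms by auto
qed

theorem lemma1:
  fixes p p' p'' :: "real \<Rightarrow> real" and \<alpha> :: real
  assumes range: "\<forall>x\<ge>0. 0 \<le> p x \<and> p x \<le> 1"
    and logconvex: "convex_on {0..} (\<lambda>x. ln (p x))"
    and decr: "\<forall>x y. 0 \<le> x \<longrightarrow> x < y \<longrightarrow> p y < p x"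
    and d1: "\<forall>x\<ge>0. (p has_real_derivative p' x) (at x within {0..})"
    and d2: "\<forall>x\<ge>0. (p' has_real_derivative p'' x) (at x within {0..})"
    and c2: "continuous_on {0..} p''"
    and alpha: "0 < \<alpha>" "\<alpha> \<le> 1"
  shows "(\<alpha> < 1 \<longrightarrow> strictly_concave_on {0..} (\<lambda>x. (- ln (p x)) powr \<alpha>))
       \<and> concave_on {0..} (\<lambda>x. (- ln (p x)) powr \<alpha>)"
proof -
  define g where "g = (\<lambda>x. - ln (p x))"
  have ppos: "p x > 0" if "x \<ge> 0" for x
  proof (rule ccontr)
    assume "\<not> p x > 0"
    then have "p x = 0" using range that by force
    moreover have "p (x + 1) < p x" using decr that by simp
    moreover have "0 \<le> p (x + 1)" using range that by simp
    ultimately show False by simp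
  qed
  have gnn: "g x \<ge> 0" if "x \<ge> 0" for x
    unfolding g_def using range ppos[OF that] that by simp
  have gmono: "g x < g y" if "0 \<le> x" "x < y" for x y
    unfolding g_def using decr that ppos[OF that(1)] ppos[of y] by simp
  have gconc: "u * g x + (1 - u) * g y \<le> g (u * x + (1 - u) * y)"
    if "0 \<le> x" "0 \<le> y" "0 \<le> u" "u \<le> 1" for x y u
  proof -
    have "ln (p (u *\<^sub>R x + (1 - u) *\<^sub>R y)) \<le> u * ln (p x) + (1 - u) * ln (p y)"
      using logconvex that unfolding convex_on_def by auto
    then show ?thesis unfolding g_def by (simp add: algebra_simps)
  qed
  have key: "u * g x powr \<alpha> + (1 - u) * g y powr \<alpha> \<le> (u * g x + (1 - u) * g y) powr \<alpha>
     \<and> (u * g x + (1 - u) * g y) powr \<alpha> \<le> g (u * x + (1 - u) * y) powr \<alpha>"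
    if "0 \<le> x" "0 \<le> y" "0 \<le> u" "u \<le> 1" for x y u
  proof
    show "u * g x powr \<alpha> + (1 - u) * g y powr \<alpha> \<le> (u * g x + (1 - u) * g y) powr \<alpha>"
      using pow_conc gnn that alpha by simp
    show "(u * g x + (1 - u) * g y) powr \<alpha> \<le> g (u * x + (1 - u) * y) powr \<alpha>"
      using gconc[OF that] gnn that alpha by (intro powr_mono2) auto
  qed
  have conc: "concave_on {0..} (\<lambda>x. (- ln (p x)) powr \<alpha>)"
    unfolding concave_on_iff
  proof (intro conjI ballI allI impI)
    show "convex {0::real..}" by simp
    fix x y u v :: real
    assume xy: "x \<in> {0..}" "y \<in> {0..}" and uv: "0 \<le> u" "0 \<le> v" "u + v = 1"
    then have v: "v = 1 - u" by simp
    show "u * (- ln (p x)) powr \<alpha> + v * (- ln (p y)) powr \<alpha>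
          \<le> (- ln (p (u *\<^sub>R x + v *\<^sub>R y))) powr \<alpha>"
      using key[of x y u] xy uv unfolding v g_def by simp
  qed
  have sconc: "strictly_concave_on {0..} (\<lambda>x. (- ln (p x)) powr \<alpha>)" if a1: "\<alpha> < 1"
    unfolding strictly_concave_on_def
  proof (intro conjI ballI allI impI)
    show "convex {0::real..}" by simp
    fix x y u :: real
    assume xy: "x \<in> {0..}" "y \<in> {0..}" "x \<noteq> y" and u: "0 < u \<and> u < 1"
    have "g x \<noteq> g y"
      using gmono[of x y] gmono[of y x] xy by (cases "x < y") auto
    then have "u * g x powr \<alpha> + (1 - u) * g y powr \<alpha> < (u * g x + (1 - u) * g y) powr \<alpha>"
      using pow_strict[of "g x" "g y" u \<alpha>] gnn xy u alpha a1 by simp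
    also have "\<dots> \<le> g (u * x + (1 - u) * y) powr \<alpha>"
      using key[of x y u] xy u by simp
    finally show "u * (- ln (p x)) powr \<alpha> + (1 - u) * (- ln (p y)) powr \<alpha>
         < (- ln (p (u * x + (1 - u) * y))) powr \<alpha>" unfolding g_def .
  qed
  show ?thesis using conc sconc by blast
qed

end
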